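(* Let $G$ be a pseudoforest, let $\tau=\tau_A$ with $A=\binom{a\ b}{c\ d}$ be a 2-switch on $G$, and let $U$ and $U'$ be different unicyclic components of $G$ such that $ab\in E(\operatorname{Forest}(U))$ and $cd\in E(\operatorname{Forest}(U'))$. Then $\tau$ is a p-switch over $G$ if and only if $\tau'=\tau_{A'}$ with $A'=\binom{a\ b}{d\ c}$ is not a p-switch over $G$.
   Context: Graphs are finite, simple, undirected, labeled. A unicyclic graph is a connected graph with exactly one cycle; a pseudoforest is a graph each of whose components is a tree or a unicyclic graph. For vertices $a,b,c,d$, $A=\binom{a\ b}{c\ d}$ is interchangeable in $G$ if $ab,cd\in E(G)$, $\{a,b\}\cap\{c,d\}=\varnothing$, $ac,bd\notin E(G)$; the 2-switch $\tau_A$ sends $G$ to $G-ab-cd+ac+bd$ if $A$ is interchangeable and to $G$ otherwise (trivial). A nontrivial 2-switch $\tau$ over a pseudoforest $G$ is a p-switch if $\tau(G)$ is a pseudoforest. $\operatorname{Cycles}(H)$ is the subgraph induced by vertices lying on some cycle of $H$; $\operatorname{Forest}(H)=H-E(\operatorname{Cycles}(H))$. *)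

theory Defs
  imports Main
begin

definition simple_graph :: "'a set \<Rightarrow> 'a set set \<Rightarrow> bool" where
  "simple_graph V E \<longleftrightarrow> finite V \<and> (\<forall>e\<in>E. \<exists>x y. x \<noteq> y \<and> x \<in> V \<and> y \<in> V \<and> e = {x, y})"

definition adj :: "'a set set \<Rightarrow> 'a \<Rightarrow> 'a \<Rightarrow> bool" where
  "adj E x y \<longleftrightarrow> {x, y} \<in> E"

definition connected_graph :: "'a set \<Rightarrow> 'a set set \<Rightarrow> bool" where
  "connected_graph V E \<longleftrightarrow> V \<noteq> {} \<and> (\<forall>x\<in>V. \<forall>y\<in>V. (adj E)\<^sup>*\<^sup>* x y)"

text \<open>A cycle is given by a list of at least 3 distinct vertices, consecutive ones
  (cyclically) adjacent. As a subgraph it is determined by its edge set.\<close>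

definition is_cycle :: "'a set set \<Rightarrow> 'a list \<Rightarrow> bool" where
  "is_cycle E xs \<longleftrightarrow> length xs \<ge> 3 \<and> distinct xs \<and>
     (\<forall>i < length xs. {xs ! i, xs ! ((i + 1) mod length xs)} \<in> E)"

definition cycle_edges :: "'a list \<Rightarrow> 'a set set" where
  "cycle_edges xs = {{xs ! i, xs ! ((i + 1) mod length xs)} | i. i < length xs}"

definition cycles_of :: "'a set set \<Rightarrow> 'a set set set" where
  "cycles_of E = {cycle_edges xs | xs. is_cycle E xs}"

definition tree :: "'a set \<Rightarrow> 'a set set \<Rightarrow> bool" where
  "tree V E \<longleftrightarrow> connected_graph V E \<and> cycles_of E = {}"

definition unicyclic :: "'a set \<Rightarrow> 'a set set \<Rightarrow> bool" where
  "unicyclic V E \<longleftrightarrow> connected_graph V E \<and> card (cycles_of E) = 1"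

definition induced :: "'a set set \<Rightarrow> 'a set \<Rightarrow> 'a set set" where
  "induced E S = {e \<in> E. e \<subseteq> S}"

definition components :: "'a set \<Rightarrow> 'a set set \<Rightarrow> 'a set set" where
  "components V E = {{y \<in> V. (adj E)\<^sup>*\<^sup>* x y} | x. x \<in> V}"

definition pseudoforest :: "'a set \<Rightarrow> 'a set set \<Rightarrow> bool" where
  "pseudoforest V E \<longleftrightarrow> simple_graph V E \<and>
     (\<forall>C \<in> components V E. tree C (induced E C) \<or> unicyclic C (induced E C))"

text \<open>Vertices lying on some cycle; Cycles(H) is the subgraph induced by them,
  Forest(H) = H - E(Cycles(H)) has edge set given by forest_edges.\<close>
definition cycle_vertices :: "'a set set \<Rightarrow> 'a set" where
  "cycle_vertices E = {v. \<exists>xs. is_cycle E xs \<and> v \<in> set xs}"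

definition forest_edges :: "'a set set \<Rightarrow> 'a set set" where
  "forest_edges E = E - induced E (cycle_vertices E)"

definition interchangeable :: "'a set set \<Rightarrow> 'a \<Rightarrow> 'a \<Rightarrow> 'a \<Rightarrow> 'a \<Rightarrow> bool" where
  "interchangeable E a b c d \<longleftrightarrow> {a, b} \<in> E \<and> {c, d} \<in> E \<and> {a, b} \<inter> {c, d} = {}
     \<and> {a, c} \<notin> E \<and> {b, d} \<notin> E"

definition two_switch :: "'a set set \<Rightarrow> 'a \<Rightarrow> 'a \<Rightarrow> 'a \<Rightarrow> 'a \<Rightarrow> 'a set set" where
  "two_switch E a b c d =
     (if interchangeable E a b c d then (E - {{a, b}, {c, d}}) \<union> {{a, c}, {b, d}} else E)"

definition p_switch :: "'a set \<Rightarrow> 'a set set \<Rightarrow> 'a \<Rightarrow> 'a \<Rightarrow> 'a \<Rightarrow> 'a \<Rightarrow> bool" where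
  "p_switch V E a b c d \<longleftrightarrow> two_switch E a b c d \<noteq> E \<and> pseudoforest V (two_switch E a b c d)"

end

theory Submission
  imports Defs
begin

abbreviation rch :: "'a set set \<Rightarrow> 'a \<Rightarrow> 'a \<Rightarrow> bool" where
  "rch F \<equiv> (adj F)\<^sup>*\<^sup>*"

lemma sg_edge:
  assumes "simple_graph V F" "{u, v} \<in> F"
  shows "u \<in> V \<and> v \<in> V \<and> u \<noteq> v"
proof -
  obtain x y where "x \<noteq> y" "x \<in> V" "y \<in> V" "{u,v} = {x,y}"
    using assms unfolding simple_graph_def by blast
  then show ?thesis by (auto simp: doubleton_eq_iff)
qed

lemma adj_sym: "adj F x y \<longleftrightarrow> adj F y x"
  by (simp add: adj_def insert_commute)

lemma rch_sym: "rch F x y \<Longrightarrow> rch F y x"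
proof (induction rule: rtranclp_induct)
  case base then show ?case by simp
next
  case (step y z)
  then show ?case using adj_sym by (metis converse_rtranclp_into_rtranclp)
qed

lemma rch_mono: "rch F x y \<Longrightarrow> F \<subseteq> F' \<Longrightarrow> rch F' x y"
proof (induction rule: rtranclp_induct)
  case base then show ?case by simp
next
  case (step y z) then show ?case
    by (metis adj_def in_mono rtranclp.rtrancl_into_rtrancl)
qed

lemma rch_mono': "F \<subseteq> F' \<Longrightarrow> \<not> rch F' x y \<Longrightarrow> \<not> rch F x y"
  using rch_mono by metis

lemma rch_closed:
  assumes "rch F x y" "x \<in> T" "\<And>u v. {u,v} \<in> F \<Longrightarrow> u \<in> T \<Longrightarrow> v \<in> T"
  shows "y \<in> T"
  using assms(1,2) by (induction rule: rtranclp_induct) (auto simp: adj_def intro: assms(3))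

lemma rch_in_V:
  assumes "simple_graph V F" "u \<in> V" "rch F u v" shows "v \<in> V"
proof (rule rch_closed[OF assms(3,2)])
  fix x y assume "{x, y} \<in> F" "x \<in> V" then show "y \<in> V" using sg_edge[OF assms(1)] by blast
qed

lemma rch_edge: "{u,v} \<in> F \<Longrightarrow> rch F u v"
  by (simp add: adj_def r_into_rtranclp)

lemma comp_obtain:
  assumes "C \<in> components V F"
  obtains x0 where "x0 \<in> V" "C = {y \<in> V. rch F x0 y}"
  using assms unfolding components_def by blast

lemma comp_closed:
  assumes "simple_graph V F" "C \<in> components V F" "u \<in> C" "rch F u v"
  shows "v \<in> C"
proof -
  obtain x0 where x0: "x0 \<in> V" "C = {y \<in> V. rch F x0 y}" using comp_obtain[OF assms(2)] .
  have r: "rch F x0 v" using x0 assms(3,4) by (auto intro: rtranclp_trans)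
  have "v \<in> V" using rch_in_V[OF assms(1) x0(1) r] .
  then show ?thesis using x0 r by auto
qed

lemma comp_closed':
  assumes "simple_graph V F" "C \<in> components V F" "u \<in> C" "rch F v u"
  shows "v \<in> C"
  using comp_closed[OF assms(1-3) rch_sym[OF assms(4)]] .

lemma comp_rch:
  assumes "C \<in> components V F" "u \<in> C" "v \<in> C"
  shows "rch F u v"
proof -
  obtain x0 where x0: "x0 \<in> V" "C = {y \<in> V. rch F x0 y}" using comp_obtain[OF assms(1)] .
  then show ?thesis using assms by (auto intro: rtranclp_trans rch_sym)
qed

lemma comp_sub: "C \<in> components V F \<Longrightarrow> C \<subseteq> V"
  by (auto elim: comp_obtain)

lemma comp_disj:
  assumes "simple_graph V F" "C \<in> components V F" "C' \<in> components V F" "u \<in> C" "v \<in> C'" "rch F u v"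
  shows "C = C'"
proof -
  have "\<And>w. w \<in> C \<Longrightarrow> w \<in> C'"
  proof -
    fix w assume "w \<in> C"
    then have "rch F w u" using comp_rch assms by metis
    then have "rch F w v" using assms(6) by (rule rtranclp_trans)
    then show "w \<in> C'" using comp_closed'[OF assms(1,3,5)] by blast
  qed
  moreover have "\<And>w. w \<in> C' \<Longrightarrow> w \<in> C"
  proof -
    fix w assume "w \<in> C'"
    then have "rch F v w" using comp_rch assms by metis
    then have "rch F u w" using assms(6) by (rule rtranclp_trans[rotated])
    then show "w \<in> C" using comp_closed[OF assms(1,2,4)] by blast
  qed
  ultimately show ?thesis by blast
qed

lemma modlt: "i < (n::nat) \<Longrightarrow> m mod n < n"
  by (rule mod_less_divisor) linarith

lemma cycle_len: "is_cycle F xs \<Longrightarrow> length xs \<ge> 3"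
  by (simp add: is_cycle_def)

lemma cycle_edge: "is_cycle F xs \<Longrightarrow> i < length xs \<Longrightarrow> {xs ! i, xs ! ((i + 1) mod length xs)} \<in> F"
  by (simp add: is_cycle_def)

lemma cycle_edge': "is_cycle F xs \<Longrightarrow> Suc i < length xs \<Longrightarrow> {xs ! i, xs ! Suc i} \<in> F"
  using cycle_edge[of F xs i] by simp

lemma cycle_vert_edge:
  assumes "is_cycle F xs" "v \<in> set xs" shows "\<exists>w. {v, w} \<in> F"
proof -
  obtain i where "i < length xs" "v = xs ! i" using assms(2) by (auto simp: in_set_conv_nth)
  then show ?thesis using cycle_edge[OF assms(1)] by blast
qed

lemma cycle_in_V: "simple_graph V F \<Longrightarrow> is_cycle F xs \<Longrightarrow> set xs \<subseteq> V"
  by (meson cycle_vert_edge sg_edge subsetI)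

lemma seg_rch:
  assumes "\<And>m. j \<le> m \<Longrightarrow> Suc m \<le> k \<Longrightarrow> {xs ! m, xs ! Suc m} \<in> F'" "j \<le> k"
  shows "rch F' (xs ! j) (xs ! k)"
  using assms
proof (induction k)
  case 0 then show ?case by simp
next
  case (Suc k)
  show ?case
  proof (cases "j = Suc k")
    case True then show ?thesis by simp
  next
    case False
    then have "rch F' (xs ! j) (xs ! k)" using Suc by auto
    moreover have "{xs ! k, xs ! Suc k} \<in> F'" using Suc False by auto
    ultimately show ?thesis by (metis adj_def rtranclp.rtrancl_into_rtrancl)
  qed
qed

lemma cycle_rch:
  assumes "is_cycle F xs" "v \<in> set xs" shows "rch F (xs ! 0) v"
proof -
  obtain i where i: "i < length xs" "v = xs ! i" using assms(2) by (auto simp: in_set_conv_nth)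
  have "rch F (xs ! 0) (xs ! i)"
    by (rule seg_rch) (use cycle_edge'[OF assms(1)] i in auto)
  then show ?thesis using i by simp
qed

lemma cycle_set_edges:
  assumes "is_cycle F xs" shows "v \<in> set xs \<longleftrightarrow> (\<exists>e\<in>cycle_edges xs. v \<in> e)"
proof
  assume "v \<in> set xs"
  then obtain i where "i < length xs" "v = xs ! i" by (auto simp: in_set_conv_nth)
  then show "\<exists>e\<in>cycle_edges xs. v \<in> e" unfolding cycle_edges_def by blast
next
  assume "\<exists>e\<in>cycle_edges xs. v \<in> e"
  then obtain i where i: "i < length xs" "v = xs ! i \<or> v = xs ! ((i+1) mod length xs)"
    unfolding cycle_edges_def by blast
  have "(i+1) mod length xs < length xs" using i(1) by (rule modlt)
  then show "v \<in> set xs" using i by auto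
qed

lemma cycle_edges_sub: "is_cycle F xs \<Longrightarrow> cycle_edges xs \<subseteq> F"
  unfolding cycle_edges_def is_cycle_def by blast

lemma is_cycle_induced: "is_cycle (induced F C) xs \<longleftrightarrow> is_cycle F xs \<and> set xs \<subseteq> C"
proof
  assume h: "is_cycle (induced F C) xs"
  have "is_cycle F xs" using h unfolding is_cycle_def induced_def by auto
  moreover have "set xs \<subseteq> C"
  proof
    fix v assume "v \<in> set xs"
    then obtain w where "{v,w} \<in> induced F C" using cycle_vert_edge[OF h] by blast
    then show "v \<in> C" by (auto simp: induced_def)
  qed
  ultimately show "is_cycle F xs \<and> set xs \<subseteq> C" by blast
next
  assume h: "is_cycle F xs \<and> set xs \<subseteq> C"
  have "\<And>i. i < length xs \<Longrightarrow> (i+1) mod length xs < length xs" by (rule modlt)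
  then have "\<And>i. i < length xs \<Longrightarrow> {xs ! i, xs ! ((i + 1) mod length xs)} \<subseteq> C"
    using h nth_mem by blast
  then show "is_cycle (induced F C) xs" using h unfolding is_cycle_def induced_def
    by auto
qed

lemma is_cycle_mono: "is_cycle F xs \<Longrightarrow> (\<And>i. i < length xs \<Longrightarrow> {xs ! i, xs ! ((i + 1) mod length xs)} \<in> F') \<Longrightarrow> is_cycle F' xs"
  by (simp add: is_cycle_def)

definition wk :: "'a set set \<Rightarrow> 'a list \<Rightarrow> bool" where
  "wk F p \<longleftrightarrow> (\<forall>i. Suc i < length p \<longrightarrow> {p ! i, p ! Suc i} \<in> F)"

lemma wk_Cons: "wk F (u # p) \<longleftrightarrow> (p = [] \<or> {u, hd p} \<in> F) \<and> wk F p"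
proof
  assume h: "wk F (u # p)"
  have "p = [] \<or> {u, hd p} \<in> F"
    using h[unfolded wk_def, rule_format, of 0] by (cases p) auto
  moreover have "wk F p" unfolding wk_def
  proof (intro allI impI)
    fix i assume "Suc i < length p"
    then show "{p ! i, p ! Suc i} \<in> F" using h[unfolded wk_def, rule_format, of "Suc i"] by simp
  qed
  ultimately show "(p = [] \<or> {u, hd p} \<in> F) \<and> wk F p" by blast
next
  assume h: "(p = [] \<or> {u, hd p} \<in> F) \<and> wk F p"
  show "wk F (u # p)" unfolding wk_def
  proof (intro allI impI)
    fix i assume i: "Suc i < length (u # p)"
    show "{(u # p) ! i, (u # p) ! Suc i} \<in> F"
    proof (cases i)
      case 0 then show ?thesis using h i by (cases p) auto
    next
      case (Suc j) then show ?thesis using h i unfolding wk_def by auto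
    qed
  qed
qed

lemma wk_suffix: "wk F (xs @ ys) \<Longrightarrow> wk F ys"
  by (induction xs) (auto simp: wk_Cons)

lemma path_exists:
  assumes "rch F u v"
  shows "\<exists>p. p \<noteq> [] \<and> hd p = u \<and> last p = v \<and> distinct p \<and> wk F p"
  using assms
proof (induction rule: converse_rtranclp_induct)
  case base
  show ?case by (rule exI[of _ "[v]"]) (simp add: wk_def)
next
  case (step u y)
  then obtain p where p: "p \<noteq> []" "hd p = y" "last p = v" "distinct p" "wk F p" by blast
  show ?case
  proof (cases "u \<in> set p")
    case True
    then obtain xs ys where xy: "p = xs @ u # ys" by (meson split_list)
    show ?thesis
      by (rule exI[of _ "u # ys"]) (use p xy wk_suffix[of F xs "u # ys"] in auto)
  next
    case False
    have "{u, y} \<in> F" using step(1) by (simp add: adj_def)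
    then show ?thesis
      by (intro exI[of _ "u # p"]) (use p False in \<open>auto simp: wk_Cons\<close>)
  qed
qed

lemma wk_rch:
  assumes "wk F p" "k < length p" shows "rch F (p ! 0) (p ! k)"
  by (rule seg_rch) (use assms in \<open>auto simp: wk_def\<close>)

lemma cycle_edge_remove:
  assumes cy: "is_cycle F xs" and i: "i < length xs"
  defines "e \<equiv> {xs ! i, xs ! ((i + 1) mod length xs)}"
  shows "rch (F - {e}) (xs ! i) (xs ! ((i + 1) mod length xs))"
proof -
  let ?n = "length xs"
  have n3: "?n \<ge> 3" and dis: "distinct xs" using cy by (auto simp: is_cycle_def)
  have ed: "{xs ! m, xs ! Suc m} \<in> F - {e}" if m: "Suc m < ?n" "m \<noteq> i" for m
  proof -
    have "{xs ! m, xs ! Suc m} \<in> F" using cycle_edge'[OF cy m(1)] .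
    moreover have "{xs ! m, xs ! Suc m} \<noteq> e"
    proof
      assume eq: "{xs ! m, xs ! Suc m} = e"
      have ii: "(i + 1) mod ?n < ?n" using i by (rule modlt)
      from eq have "(xs ! m = xs ! i \<and> xs ! Suc m = xs ! ((i + 1) mod ?n)) \<or>
                    (xs ! m = xs ! ((i + 1) mod ?n) \<and> xs ! Suc m = xs ! i)"
        unfolding e_def by (simp add: doubleton_eq_iff)
      then have "(m = i) \<or> (m = (i + 1) mod ?n \<and> Suc m = i)"
        using dis m i ii by (auto simp: nth_eq_iff_index_eq)
      then show False
      proof
        assume "m = i" then show False using m by simp
      next
        assume h: "m = (i + 1) mod ?n \<and> Suc m = i"
        show False
        proof (cases "Suc i < ?n")
          case True then have "m = Suc i" "Suc m = i" using h by auto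
          then show False by simp
        next
          case False then have "Suc i = ?n" using i by simp
          then show False using h n3 by simp
        qed
      qed
    qed
    ultimately show ?thesis by blast
  qed
  show ?thesis
  proof (cases "Suc i < ?n")
    case False
    then have iv: "i = ?n - 1" using i by simp
    then have "i + 1 = ?n" using n3 by simp
    then have "(i + 1) mod ?n = 0" by simp
    moreover have "rch (F - {e}) (xs ! 0) (xs ! (?n - 1))"
      by (rule seg_rch) (use ed iv in auto)
    ultimately show ?thesis using iv rch_sym by metis
  next
    case True
    then have im: "(i + 1) mod ?n = Suc i" by simp
    have r1: "rch (F - {e}) (xs ! Suc i) (xs ! (?n - 1))"
      by (rule seg_rch) (use ed True in auto)
    have r3: "rch (F - {e}) (xs ! 0) (xs ! i)"
      by (rule seg_rch) (use ed True in auto)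
    have w: "{xs ! (?n - 1), xs ! 0} \<in> F - {e}"
    proof -
      have "{xs ! (?n - 1), xs ! ((?n - 1 + 1) mod ?n)} \<in> F" using cycle_edge[OF cy, of "?n - 1"] n3 by simp
      moreover have "?n - 1 + 1 = ?n" using n3 by simp
      ultimately have "{xs ! (?n - 1), xs ! 0} \<in> F" by simp
      moreover have "{xs ! (?n - 1), xs ! 0} \<noteq> e"
      proof
        assume eq: "{xs ! (?n - 1), xs ! 0} = e"
        then have "(xs ! (?n - 1) = xs ! i \<and> xs ! 0 = xs ! Suc i) \<or>
                    (xs ! (?n - 1) = xs ! Suc i \<and> xs ! 0 = xs ! i)"
          unfolding e_def im by (simp add: doubleton_eq_iff)
        have I: "\<And>p q. p < ?n \<Longrightarrow> q < ?n \<Longrightarrow> xs!p = xs!q \<Longrightarrow> p = q"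
          using dis nth_eq_iff_index_eq by blast
        show False using \<open>_ \<or> _\<close>
        proof
          assume h: "xs ! (?n - 1) = xs ! i \<and> xs ! 0 = xs ! Suc i"
          have "?n - 1 = i" by (rule I) (use h True n3 in auto)
          then show False using True by simp
        next
          assume h: "xs ! (?n - 1) = xs ! Suc i \<and> xs ! 0 = xs ! i"
          have "?n - 1 = Suc i" by (rule I) (use h True n3 in auto)
          moreover have "0 = i" by (rule I) (use h True n3 in auto)
          ultimately show False using n3 by simp
        qed
      qed
      ultimately show ?thesis by blast
    qed
    have "rch (F - {e}) (xs ! Suc i) (xs ! i)"
      using r1 rch_edge[OF w] r3 by (meson rtranclp_trans)
    then show ?thesis using im rch_sym by metis
  qed
qed

lemma cycle_avoid:
  assumes "is_cycle F xs" "\<not> rch (F - {{u, v}}) u v" "i < length xs"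
  shows "{xs ! i, xs ! ((i + 1) mod length xs)} \<noteq> {u, v}"
proof
  assume eq: "{xs ! i, xs ! ((i + 1) mod length xs)} = {u, v}"
  have "rch (F - {{u,v}}) (xs ! i) (xs ! ((i + 1) mod length xs))"
    using cycle_edge_remove[OF assms(1,3)] eq by simp
  then show False using eq assms(2) rch_sym by (metis doubleton_eq_iff)
qed

lemma sg_finite: "simple_graph V F \<Longrightarrow> finite F"
proof -
  assume s: "simple_graph V F"
  have "F \<subseteq> Pow V"
  proof
    fix e assume "e \<in> F"
    then obtain x y where "x \<in> V" "y \<in> V" "e = {x, y}" using s unfolding simple_graph_def by meson
    then show "e \<in> Pow V" by simp
  qed
  moreover have "finite V" using s by (simp add: simple_graph_def)
  ultimately show ?thesis using finite_subset by blast
qed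

lemma cycles_finite: "finite F \<Longrightarrow> finite (cycles_of F)"
proof -
  assume f: "finite F"
  have "cycles_of F \<subseteq> Pow F"
  proof
    fix X assume "X \<in> cycles_of F"
    then obtain xs where "X = cycle_edges xs" "is_cycle F xs" unfolding cycles_of_def by blast
    then show "X \<in> Pow F" using cycle_edges_sub by blast
  qed
  then show ?thesis using f finite_subset by blast
qed

lemma comp_connected:
  assumes s: "simple_graph V F" and C: "C \<in> components V F"
  shows "connected_graph C (induced F C)"
proof -
  obtain x0 where x0: "x0 \<in> V" "C = {y \<in> V. rch F x0 y}" using comp_obtain[OF C] .
  have key: "rch (induced F C) x0 y" if "rch F x0 y" for y
    using that
  proof (induction rule: rtranclp_induct)
    case base then show ?case by simp
  next
    case (step y z)
    have e: "{y, z} \<in> F" using step(2) by (simp add: adj_def)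
    have "y \<in> V" "z \<in> V" using sg_edge[OF s e] by auto
    moreover have "rch F x0 z" using step(1,2) by (rule rtranclp.rtrancl_into_rtrancl)
    ultimately have "{y, z} \<subseteq> C" using x0 step(1) by auto
    then have "{y, z} \<in> induced F C" using e by (simp add: induced_def)
    then show ?case using step(3) by (metis adj_def rtranclp.rtrancl_into_rtrancl)
  qed
  have "x0 \<in> C" using x0 by simp
  moreover have "rch (induced F C) x y" if "x \<in> C" "y \<in> C" for x y
  proof -
    have "rch (induced F C) x0 x" "rch (induced F C) x0 y" using that x0 key by auto
    then show ?thesis by (meson rch_sym rtranclp_trans)
  qed
  ultimately show ?thesis unfolding connected_graph_def by blast
qed

lemma pf_intro:
  assumes s: "simple_graph V F"
    and h: "\<And>C xs ys. C \<in> components V F \<Longrightarrow> is_cycle F xs \<Longrightarrow> is_cycle F ys \<Longrightarrow>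
              set xs \<subseteq> C \<Longrightarrow> set ys \<subseteq> C \<Longrightarrow> cycle_edges xs = cycle_edges ys"
  shows "pseudoforest V F"
  unfolding pseudoforest_def
proof (intro conjI ballI s)
  fix C assume C: "C \<in> components V F"
  let ?Z = "cycles_of (induced F C)"
  have fin: "finite ?Z" using cycles_finite sg_finite[OF s]
    by (metis finite_subset induced_def mem_Collect_eq subsetI)
  have "\<forall>X\<in>?Z. \<forall>Y\<in>?Z. X = Y"
    unfolding cycles_of_def using h[OF C] is_cycle_induced by blast
  then have "card ?Z \<le> 1" using fin card_le_Suc0_iff_eq by (metis One_nat_def)
  then have "card ?Z = 0 \<or> card ?Z = 1" by linarith
  then show "tree C (induced F C) \<or> unicyclic C (induced F C)"
    using comp_connected[OF s C] fin unfolding tree_def unicyclic_def by auto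
qed

lemma pf_elim:
  assumes p: "pseudoforest V F" and C: "C \<in> components V F"
    and "is_cycle F xs" "is_cycle F ys" "set xs \<subseteq> C" "set ys \<subseteq> C"
  shows "cycle_edges xs = cycle_edges ys"
proof -
  let ?Z = "cycles_of (induced F C)"
  have "cycle_edges xs \<in> ?Z" "cycle_edges ys \<in> ?Z"
    unfolding cycles_of_def using assms is_cycle_induced by blast+
  moreover have "tree C (induced F C) \<or> unicyclic C (induced F C)"
    using p C unfolding pseudoforest_def by blast
  ultimately have "card ?Z = 1" unfolding tree_def unicyclic_def by auto
  then obtain X where "?Z = {X}" by (meson card_1_singletonE)
  then show ?thesis using \<open>cycle_edges xs \<in> ?Z\<close> \<open>cycle_edges ys \<in> ?Z\<close> by auto
qed

lemma chain4: "rch F a x \<Longrightarrow> rch F x x' \<Longrightarrow> rch F b x' \<Longrightarrow> rch F a b"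
proof -
  assume 1: "rch F a x" and 2: "rch F x x'" and 3: "rch F b x'"
  have "rch F x' b" using 3 by (rule rch_sym)
  then show ?thesis using rtranclp_trans[OF rtranclp_trans[OF 1 2]] by blast
qed

lemma cyc_in_comp:
  assumes s: "simple_graph V F" and c: "is_cycle F xs" and K: "K \<in> components V F" and x: "xs ! 0 \<in> K"
  shows "set xs \<subseteq> K"
  using comp_closed[OF s K x] cycle_rch[OF c] by blast

lemma cyc_hd: "is_cycle F xs \<Longrightarrow> xs ! 0 \<in> set xs"
  unfolding is_cycle_def by (intro nth_mem) linarith

definition bad :: "'a set set \<Rightarrow> 'a set \<Rightarrow> 'a set \<Rightarrow> 'a set set \<Rightarrow> bool" where
  "bad E U U' F \<longleftrightarrow> (\<exists>xs ys. is_cycle E xs \<and> is_cycle E ys \<and> set xs \<subseteq> U \<and> set ys \<subseteq> U' \<and>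
      rch F (xs ! 0) (ys ! 0))"

locale sw =
  fixes V :: "'a set" and E :: "'a set set" and U U' :: "'a set" and a b c d :: 'a
  assumes pf: "pseudoforest V E"
    and cU: "U \<in> components V E" and cU': "U' \<in> components V E" and ne: "U \<noteq> U'"
    and uU: "unicyclic U (induced E U)" and uU': "unicyclic U' (induced E U')"
    and fab: "{a, b} \<in> forest_edges (induced E U)"
    and fcd: "{c, d} \<in> forest_edges (induced E U')"
begin

lemma sg: "simple_graph V E" using pf by (simp add: pseudoforest_def)

lemma ab: "{a, b} \<in> E" "a \<in> U" "b \<in> U"
  using fab by (auto simp: forest_edges_def induced_def)

lemma cd: "{c, d} \<in> E" "c \<in> U'" "d \<in> U'"
  using fcd by (auto simp: forest_edges_def induced_def)

lemma sep: "u \<in> U \<Longrightarrow> w \<in> U' \<Longrightarrow> \<not> rch E u w"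
  using comp_disj[OF sg cU cU'] ne by blast

lemma disj: "u \<in> U \<Longrightarrow> u \<in> U' \<Longrightarrow> False"
  using sep by blast

lemma sw_swap: "sw V E U' U c d a b"
  by unfold_locales (use pf cU cU' ne uU uU' fab fcd in auto)

lemma sw_ba: "sw V E U U' b a d c"
  by unfold_locales (use pf cU cU' ne uU uU' fab fcd in \<open>auto simp: insert_commute\<close>)

lemma sw_dc: "sw V E U U' a b d c"
  by unfold_locales (use pf cU cU' ne uU uU' fab fcd in \<open>auto simp: insert_commute\<close>)

lemma bridge_ab: "\<not> rch (E - {{a, b}}) a b"
proof
  assume r: "rch (E - {{a, b}}) a b"
  obtain p where p: "p \<noteq> []" "hd p = b" "last p = a" "distinct p" "wk (E - {{a, b}}) p"
    using path_exists[OF rch_sym[OF r]] by blast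
  have anb: "a \<noteq> b" using sg_edge[OF sg ab(1)] by simp
  let ?n = "length p"
  have p0: "p ! 0 = b" using p by (simp add: hd_conv_nth)
  have pn: "p ! (?n - 1) = a" using p by (simp add: last_conv_nth)
  have n2: "?n \<ge> 2"
  proof (rule ccontr)
    assume "\<not> ?n \<ge> 2"
    moreover have "?n \<noteq> 0" using p(1) by simp
    ultimately have "?n = 1" by linarith
    then show False using p0 pn anb by simp
  qed
  have n3: "?n \<ge> 3"
  proof (rule ccontr)
    assume "\<not> ?n \<ge> 3"
    then have "?n = 2" using n2 by simp
    then have "{p ! 0, p ! 1} \<in> E - {{a, b}}" using p(5) unfolding wk_def by auto
    moreover have "p ! 1 = a" using pn \<open>?n = 2\<close> by simp
    ultimately have "{b, a} \<in> E - {{a, b}}" using p0 by simp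
    moreover have "{b, a} = {a, b}" by (rule insert_commute)
    ultimately show False by simp
  qed
  have cyc: "is_cycle E p"
    unfolding is_cycle_def
  proof (intro conjI allI impI n3 p(4))
    fix i assume i: "i < ?n"
    show "{p ! i, p ! ((i + 1) mod ?n)} \<in> E"
    proof (cases "Suc i < ?n")
      case True
      then show ?thesis using p(5) unfolding wk_def by auto
    next
      case False
      then have "i = ?n - 1" "i + 1 = ?n" using i by auto
      then have "p ! i = a" "p ! ((i + 1) mod ?n) = b" using p0 pn by simp_all
      moreover have "{a, b} = {b, a}" by (rule insert_commute)
      ultimately show ?thesis using ab(1) by simp
    qed
  qed
  have "set p \<subseteq> U"
  proof
    fix v assume "v \<in> set p"
    then obtain k where "k < ?n" "v = p ! k" by (auto simp: in_set_conv_nth)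
    then have "rch (E - {{a, b}}) (p ! 0) v" using wk_rch[OF p(5)] by simp
    then have "rch (E - {{a, b}}) b v" using p0 by simp
    then have "rch E b v" by (rule rch_mono) blast
    then show "v \<in> U" by (rule comp_closed[OF sg cU ab(3)])
  qed
  then have "is_cycle (induced E U) p" using cyc is_cycle_induced by blast
  moreover have "a \<in> set p" using p(1,3) last_in_set by metis
  moreover have "b \<in> set p" using p(1,2) hd_in_set by metis
  ultimately have "a \<in> cycle_vertices (induced E U)" "b \<in> cycle_vertices (induced E U)"
    unfolding cycle_vertices_def by blast+
  then have "{a, b} \<in> induced (induced E U) (cycle_vertices (induced E U))"
    using ab unfolding induced_def by simp
  then show False using fab unfolding forest_edges_def by simp
qed

lemma bridge_cd: "\<not> rch (E - {{c, d}}) c d"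
  using sw.bridge_ab[OF sw_swap] .

lemma nab0: "\<not> rch (E - {{a, b}, {c, d}}) a b"
  by (rule rch_mono'[OF _ bridge_ab]) blast

lemma ncd0: "\<not> rch (E - {{a, b}, {c, d}}) c d"
  by (rule rch_mono'[OF _ bridge_cd]) blast

lemma sep0: "u \<in> U \<Longrightarrow> w \<in> U' \<Longrightarrow> \<not> rch (E - {{a, b}, {c, d}}) u w"
  by (rule rch_mono'[OF _ sep]) auto

lemma R1: "u \<in> U \<Longrightarrow> rch (E - {{a, b}, {c, d}}) a u \<or> rch (E - {{a, b}, {c, d}}) b u"
proof -
  assume u: "u \<in> U"
  let ?E0 = "E - {{a, b}, {c, d}}"
  have "rch E a u" using comp_rch[OF cU ab(2) u] .
  then have "u \<in> {y. y \<in> U \<and> (rch ?E0 a y \<or> rch ?E0 b y)}"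
  proof (rule rch_closed)
    show "a \<in> {y. y \<in> U \<and> (rch ?E0 a y \<or> rch ?E0 b y)}" using ab by simp
  next
    fix x y assume e: "{x, y} \<in> E" and x: "x \<in> {y. y \<in> U \<and> (rch ?E0 a y \<or> rch ?E0 b y)}"
    have "x \<in> U" using x by simp
    then have yU: "y \<in> U" using comp_closed[OF sg cU _ rch_edge[OF e]] by simp
    show "y \<in> {y. y \<in> U \<and> (rch ?E0 a y \<or> rch ?E0 b y)}"
    proof (cases "{x, y} = {a, b}")
      case True
      then have "y = a \<or> y = b" by (auto simp: doubleton_eq_iff)
      then show ?thesis using yU by auto
    next
      case False
      have "{x, y} \<noteq> {c, d}"
      proof
        assume "{x, y} = {c, d}"
        then have "x = c \<or> x = d" by (auto simp: doubleton_eq_iff)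
        moreover have "x \<in> U" using x by simp
        ultimately show False using cd(2,3) disj by metis
      qed
      then have "{x, y} \<in> ?E0" using e False by simp
      then have r: "rch ?E0 x y" by (rule rch_edge)
      have "rch ?E0 a x \<or> rch ?E0 b x" using x by simp
      then have "rch ?E0 a y \<or> rch ?E0 b y" using rtranclp_trans[OF _ r] by blast
      then show ?thesis using yU by simp
    qed
  qed
  then show ?thesis by simp
qed

lemma L_yes:
  assumes "rch (E - {{a, b}, {c, d}}) a u" "rch (E - {{a, b}, {c, d}}) c w"
  shows "rch ((E - {{a, b}, {c, d}}) \<union> {{a, c}, {b, d}}) u w"
proof -
  let ?E1 = "(E - {{a, b}, {c, d}}) \<union> {{a, c}, {b, d}}"
  have "rch ?E1 a u" by (rule rch_mono[OF assms(1)]) blast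
  then have 1: "rch ?E1 u a" by (rule rch_sym)
  have 2: "rch ?E1 a c" by (rule rch_edge) simp
  have 3: "rch ?E1 c w" by (rule rch_mono[OF assms(2)]) blast
  show ?thesis using rtranclp_trans[OF rtranclp_trans[OF 1 2] 3] .
qed

lemma L_no:
  assumes "rch (E - {{a, b}, {c, d}}) a u" "rch (E - {{a, b}, {c, d}}) d w"
  shows "\<not> rch ((E - {{a, b}, {c, d}}) \<union> {{a, c}, {b, d}}) u w"
proof
  let ?E0 = "E - {{a, b}, {c, d}}"
  let ?T = "{x. rch ?E0 a x \<or> rch ?E0 c x}"
  assume r: "rch (?E0 \<union> {{a, c}, {b, d}}) u w"
  have "\<not> rch ?E0 c b"
  proof
    assume "rch ?E0 c b"
    then have "rch ?E0 b c" by (rule rch_sym)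
    then show False using sep0[OF ab(3) cd(2)] by simp
  qed
  then have nb: "b \<notin> ?T" using nab0 by simp
  have nd: "d \<notin> ?T" using ncd0 sep0[OF ab(2) cd(3)] by simp
  have "w \<in> ?T"
  proof (rule rch_closed[OF r])
    show "u \<in> ?T" using assms(1) by simp
  next
    fix x y assume e: "{x, y} \<in> ?E0 \<union> {{a, c}, {b, d}}" and x: "x \<in> ?T"
    show "y \<in> ?T"
    proof (cases "{x, y} \<in> ?E0")
      case True
      have "rch ?E0 a x \<or> rch ?E0 c x" using x by simp
      then have "rch ?E0 a y \<or> rch ?E0 c y" using rtranclp_trans[OF _ rch_edge[OF True]] by blast
      then show ?thesis by simp
    next
      case False
      then have "{x, y} = {a, c} \<or> {x, y} = {b, d}" using e by blast
      then show ?thesis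
      proof
        assume "{x, y} = {a, c}"
        then have "y = a \<or> y = c" by (auto simp: doubleton_eq_iff)
        then show ?thesis by auto
      next
        assume "{x, y} = {b, d}"
        then have "x = b \<or> x = d" by (auto simp: doubleton_eq_iff)
        then show ?thesis using x nb nd by auto
      qed
    qed
  qed
  then have "rch ?E0 a w \<or> rch ?E0 c w" by simp
  moreover have "rch ?E0 w d" using assms(2) by (rule rch_sym)
  ultimately have "rch ?E0 a d \<or> rch ?E0 c d" using rtranclp_trans[OF _ \<open>rch ?E0 w d\<close>] by blast
  then show False using nd by simp
qed

abbreviation E0 where "E0 \<equiv> E - {{a, b}, {c, d}}"
abbreviation E1 where "E1 \<equiv> (E - {{a, b}, {c, d}}) \<union> {{a, c}, {b, d}}"

lemma dist: "a \<noteq> c" "a \<noteq> d" "b \<noteq> c" "b \<noteq> d"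
  using disj ab cd by metis+

lemma ac_notin: "{a, c} \<notin> E"
  using sep[OF ab(2) cd(2)] rch_edge by metis

lemma bd_notin: "{b, d} \<notin> E"
  using sep[OF ab(3) cd(3)] rch_edge by metis

lemma eqba: "{b, a} = {a, b}" "{d, c} = {c, d}" by (rule insert_commute)+

lemma E0_ba: "E - {{b, a}, {d, c}} = E0"
  unfolding eqba by (rule refl)

lemma E1_ba: "(E - {{b, a}, {d, c}}) \<union> {{b, d}, {a, c}} = E1"
  unfolding eqba by blast

lemma E0_swap: "E - {{c, d}, {a, b}} = E0"
  by blast

lemma bridge1_ac: "\<not> rch (E1 - {{a, c}}) a c"
proof
  let ?T = "{x. rch E0 a x}"
  assume r: "rch (E1 - {{a, c}}) a c"
  have "c \<in> ?T"
  proof (rule rch_closed[OF r])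
    show "a \<in> ?T" by simp
  next
    fix x y assume e: "{x, y} \<in> E1 - {{a, c}}" and x: "x \<in> ?T"
    show "y \<in> ?T"
    proof (cases "{x, y} \<in> E0")
      case True
      have "rch E0 a x" using x by simp
      then have "rch E0 a y" using rtranclp_trans[OF _ rch_edge[OF True]] by blast
      then show ?thesis by simp
    next
      case False
      then have "{x, y} = {b, d}" using e by blast
      then have "x = b \<or> x = d" by (auto simp: doubleton_eq_iff)
      moreover have "\<not> rch E0 a b" by (rule nab0)
      moreover have "\<not> rch E0 a d" by (rule sep0[OF ab(2) cd(3)])
      ultimately show ?thesis using x by auto
    qed
  qed
  then show False using sep0[OF ab(2) cd(2)] by simp
qed

lemma bridge1_bd: "\<not> rch (E1 - {{b, d}}) b d"
  using sw.bridge1_ac[OF sw_ba] unfolding E1_ba .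

lemma cyc_E0: "is_cycle E xs \<Longrightarrow> is_cycle E0 xs"
proof -
  assume c: "is_cycle E xs"
  show ?thesis
  proof (rule is_cycle_mono[OF c])
    fix i assume i: "i < length xs"
    have "{xs ! i, xs ! ((i + 1) mod length xs)} \<in> E" by (rule cycle_edge[OF c i])
    moreover have "{xs ! i, xs ! ((i + 1) mod length xs)} \<noteq> {a, b}"
      by (rule cycle_avoid[OF c bridge_ab i])
    moreover have "{xs ! i, xs ! ((i + 1) mod length xs)} \<noteq> {c, d}"
      by (rule cycle_avoid[OF c bridge_cd i])
    ultimately show "{xs ! i, xs ! ((i + 1) mod length xs)} \<in> E0" by blast
  qed
qed

lemma cyc_E1: "is_cycle E xs \<Longrightarrow> is_cycle E1 xs"
proof -
  assume c: "is_cycle E xs"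
  have c0: "is_cycle E0 xs" using cyc_E0[OF c] .
  show ?thesis
  proof (rule is_cycle_mono[OF c0])
    fix i assume i: "i < length xs"
    show "{xs ! i, xs ! ((i + 1) mod length xs)} \<in> E1" using cycle_edge[OF c0 i] by blast
  qed
qed

lemma cyc_E1_rev: "is_cycle E1 xs \<Longrightarrow> is_cycle E xs"
proof -
  assume c: "is_cycle E1 xs"
  show ?thesis
  proof (rule is_cycle_mono[OF c])
    fix i assume i: "i < length xs"
    have "{xs ! i, xs ! ((i + 1) mod length xs)} \<in> E1" by (rule cycle_edge[OF c i])
    moreover have "{xs ! i, xs ! ((i + 1) mod length xs)} \<noteq> {a, c}"
      by (rule cycle_avoid[OF c bridge1_ac i])
    moreover have "{xs ! i, xs ! ((i + 1) mod length xs)} \<noteq> {b, d}"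
      by (rule cycle_avoid[OF c bridge1_bd i])
    ultimately show "{xs ! i, xs ! ((i + 1) mod length xs)} \<in> E" by blast
  qed
qed

lemma sg1: "simple_graph V E1"
proof -
  have aV: "a \<in> V" "b \<in> V" "c \<in> V" "d \<in> V"
    using comp_sub[OF cU] comp_sub[OF cU'] ab cd by auto
  have fin: "finite V" using sg by (simp add: simple_graph_def)
  have "\<forall>e\<in>E. \<exists>x y. x \<noteq> y \<and> x \<in> V \<and> y \<in> V \<and> e = {x, y}" using sg by (simp add: simple_graph_def)
  moreover have "\<exists>x y. x \<noteq> y \<and> x \<in> V \<and> y \<in> V \<and> {a, c} = {x, y}"
    using aV dist by blast
  moreover have "\<exists>x y. x \<noteq> y \<and> x \<in> V \<and> y \<in> V \<and> {b, d} = {x, y}"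
    using aV dist by blast
  ultimately have "\<forall>e\<in>E1. \<exists>x y. x \<noteq> y \<and> x \<in> V \<and> y \<in> V \<and> e = {x, y}"
    by (metis DiffD1 Un_iff empty_iff insert_iff)
  then show ?thesis using fin by (simp add: simple_graph_def)
qed

lemma R1': "w \<in> U' \<Longrightarrow> rch E0 c w \<or> rch E0 d w"
  using sw.R1[OF sw_swap] unfolding E0_swap .

lemma E1_comm: "E0 \<union> {{b, d}, {a, c}} = E1" by blast

lemma L_no_ba: "rch E0 b u \<Longrightarrow> rch E0 c w \<Longrightarrow> \<not> rch E1 u w"
  using sw.L_no[OF sw_ba] unfolding E0_ba E1_comm .

lemma L_yes_ba: "rch E0 b u \<Longrightarrow> rch E0 d w \<Longrightarrow> rch E1 u w"
  using sw.L_yes[OF sw_ba] unfolding E0_ba E1_comm .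

lemma CH:
  assumes u: "u \<in> U" and w: "w \<in> U'"
  shows "rch E1 u w \<longleftrightarrow> (rch E0 a u \<and> rch E0 c w) \<or> (rch E0 b u \<and> rch E0 d w)"
proof
  assume r: "rch E1 u w"
  have no2: "\<not> (rch E0 b u \<and> rch E0 c w)"
  proof
    assume h: "rch E0 b u \<and> rch E0 c w"
    show False using L_no_ba[OF h[THEN conjunct1] h[THEN conjunct2]] r by simp
  qed
  have no1: "\<not> (rch E0 a u \<and> rch E0 d w)"
  proof
    assume h: "rch E0 a u \<and> rch E0 d w"
    show False using L_no[OF h[THEN conjunct1] h[THEN conjunct2]] r by simp
  qed
  have "rch E0 a u \<or> rch E0 b u" by (rule R1[OF u])
  moreover have "rch E0 c w \<or> rch E0 d w" by (rule R1'[OF w])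
  ultimately show "(rch E0 a u \<and> rch E0 c w) \<or> (rch E0 b u \<and> rch E0 d w)"
    using no1 no2 by blast
next
  assume "(rch E0 a u \<and> rch E0 c w) \<or> (rch E0 b u \<and> rch E0 d w)"
  then show "rch E1 u w"
  proof
    assume h: "rch E0 a u \<and> rch E0 c w"
    show ?thesis using L_yes[OF h[THEN conjunct1] h[THEN conjunct2]] .
  next
    assume h: "rch E0 b u \<and> rch E0 d w"
    show ?thesis using L_yes_ba[OF h[THEN conjunct1] h[THEN conjunct2]] .
  qed
qed

lemma OUT:
  assumes r: "rch E1 u v" and nu: "u \<notin> U" "u \<notin> U'"
  shows "rch E u v"
proof -
  have "v \<in> {y. rch E u y}"
  proof (rule rch_closed[OF r])
    show "u \<in> {y. rch E u y}" by simp
  next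
    fix x y assume e: "{x, y} \<in> E1" and x: "x \<in> {y. rch E u y}"
    have rx: "rch E u x" using x by simp
    show "y \<in> {y. rch E u y}"
    proof (cases "{x, y} \<in> E")
      case True
      have "rch E u y" using rtranclp_trans[OF rx rch_edge[OF True]] .
      then show ?thesis by simp
    next
      case False
      then have "{x, y} = {a, c} \<or> {x, y} = {b, d}" using e by blast
      then have "x = a \<or> x = b \<or> x = c \<or> x = d" by (auto simp: doubleton_eq_iff)
      then have "x \<in> U \<or> x \<in> U'" using ab cd by blast
      then have "u \<in> U \<or> u \<in> U'"
        using comp_closed'[OF sg cU _ rx] comp_closed'[OF sg cU' _ rx] by blast
      then show ?thesis using nu by blast
    qed
  qed
  then show ?thesis by simp
qed

lemma hd_V: "is_cycle E xs \<Longrightarrow> xs ! 0 \<in> V"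
  using cycle_in_V[OF sg] cyc_hd by blast

lemma PF: "pseudoforest V E1 \<longleftrightarrow> \<not> bad E U U' E1"
proof
  assume pf1: "pseudoforest V E1"
  show "\<not> bad E U U' E1"
  proof
    assume "bad E U U' E1"
    then obtain xs ys where h: "is_cycle E xs" "is_cycle E ys" "set xs \<subseteq> U" "set ys \<subseteq> U'"
      "rch E1 (xs ! 0) (ys ! 0)" unfolding bad_def by blast
    let ?x = "xs ! 0"
    let ?C = "{y \<in> V. rch E1 ?x y}"
    have xV: "?x \<in> V" using hd_V[OF h(1)] .
    have C: "?C \<in> components V E1" unfolding components_def using xV by blast
    have "set xs \<subseteq> ?C" by (rule cyc_in_comp[OF sg1 cyc_E1[OF h(1)] C]) (use xV in simp)
    moreover have "set ys \<subseteq> ?C" by (rule cyc_in_comp[OF sg1 cyc_E1[OF h(2)] C]) (use hd_V[OF h(2)] h(5) in simp)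
    ultimately have eq: "cycle_edges xs = cycle_edges ys"
      using pf_elim[OF pf1 C cyc_E1[OF h(1)] cyc_E1[OF h(2)]] by blast
    have "?x \<in> set xs" using cyc_hd[OF h(1)] .
    then have "\<exists>e\<in>cycle_edges ys. ?x \<in> e" using cycle_set_edges[OF h(1)] eq by blast
    then have "?x \<in> set ys" using cycle_set_edges[OF h(2)] by blast
    then show False using h(3,4) \<open>?x \<in> set xs\<close> disj by blast
  qed
next
  assume nb: "\<not> bad E U U' E1"
  have key: "cycle_edges xs = cycle_edges ys"
    if c: "is_cycle E xs" "is_cycle E ys" and r: "rch E1 (xs ! 0) (ys ! 0)"
       and n: "xs ! 0 \<notin> U" "xs ! 0 \<notin> U'" for xs ys
  proof -
    let ?x = "xs ! 0"
    let ?K = "{y \<in> V. rch E ?x y}"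
    have xV: "?x \<in> V" using hd_V[OF c(1)] .
    have K: "?K \<in> components V E" unfolding components_def using xV by blast
    have re: "rch E ?x (ys ! 0)" using OUT[OF r n] .
    have "set xs \<subseteq> ?K" by (rule cyc_in_comp[OF sg c(1) K]) (use xV in simp)
    moreover have "set ys \<subseteq> ?K" by (rule cyc_in_comp[OF sg c(2) K]) (use hd_V[OF c(2)] re in simp)
    ultimately show ?thesis using pf_elim[OF pf K c] by blast
  qed
  show "pseudoforest V E1"
  proof (rule pf_intro[OF sg1])
    fix C xs ys
    assume C: "C \<in> components V E1" and c1: "is_cycle E1 xs" "is_cycle E1 ys"
      and s: "set xs \<subseteq> C" "set ys \<subseteq> C"
    have c: "is_cycle E xs" "is_cycle E ys" using cyc_E1_rev c1 by blast+
    have x0: "xs ! 0 \<in> C" "ys ! 0 \<in> C" using s cyc_hd[OF c(1)] cyc_hd[OF c(2)] by blast+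
    have r: "rch E1 (xs ! 0) (ys ! 0)" using comp_rch[OF C x0] .
    have r': "rch E1 (ys ! 0) (xs ! 0)" using rch_sym[OF r] .
    have inU: "set zs \<subseteq> U" if "is_cycle E zs" "zs ! 0 \<in> U" for zs
      using cyc_in_comp[OF sg that(1) cU that(2)] .
    have inU': "set zs \<subseteq> U'" if "is_cycle E zs" "zs ! 0 \<in> U'" for zs
      using cyc_in_comp[OF sg that(1) cU' that(2)] .
    show "cycle_edges xs = cycle_edges ys"
    proof (cases "xs ! 0 \<notin> U \<and> xs ! 0 \<notin> U'")
      case True then show ?thesis using key[OF c r] by blast
    next
      case F1: False
      show ?thesis
      proof (cases "ys ! 0 \<notin> U \<and> ys ! 0 \<notin> U'")
        case True then show ?thesis using key[OF c(2) c(1) r'] by simp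
      next
        case F2: False
        have "xs ! 0 \<in> U \<or> xs ! 0 \<in> U'" using F1 by blast
        moreover have "ys ! 0 \<in> U \<or> ys ! 0 \<in> U'" using F2 by blast
        ultimately show ?thesis
        proof (elim disjE)
          assume "xs ! 0 \<in> U" "ys ! 0 \<in> U"
          then show ?thesis using pf_elim[OF pf cU c inU[OF c(1)] inU[OF c(2)]] by blast
        next
          assume "xs ! 0 \<in> U'" "ys ! 0 \<in> U'"
          then show ?thesis using pf_elim[OF pf cU' c inU'[OF c(1)] inU'[OF c(2)]] by blast
        next
          assume "xs ! 0 \<in> U" "ys ! 0 \<in> U'"
          then have "bad E U U' E1" unfolding bad_def using c inU[OF c(1)] inU'[OF c(2)] r by blast
          then show ?thesis using nb by blast
        next
          assume "xs ! 0 \<in> U'" "ys ! 0 \<in> U"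
          then have "bad E U U' E1" unfolding bad_def using c inU[OF c(2)] inU'[OF c(1)] r' by blast
          then show ?thesis using nb by blast
        qed
      qed
    qed
  qed
qed

lemma cyc_exists: "\<exists>xs. is_cycle E xs \<and> set xs \<subseteq> U"
proof -
  have "card (cycles_of (induced E U)) = 1" using uU by (simp add: unicyclic_def)
  then obtain X where "cycles_of (induced E U) = {X}" by (meson card_1_singletonE)
  then have "X \<in> cycles_of (induced E U)" by simp
  then obtain xs where "is_cycle (induced E U) xs" unfolding cycles_of_def by blast
  then show ?thesis using is_cycle_induced by blast
qed

lemma cyc_same:
  assumes "is_cycle E xs" "set xs \<subseteq> U" "is_cycle E xs'" "set xs' \<subseteq> U"
  shows "rch E0 (xs ! 0) (xs' ! 0)"
proof -
  have eq: "cycle_edges xs = cycle_edges xs'" using pf_elim[OF pf cU assms(1,3,2,4)] .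
  have "\<exists>e\<in>cycle_edges xs'. xs' ! 0 \<in> e" using cycle_set_edges[OF assms(3)] cyc_hd[OF assms(3)] by blast
  then have "xs' ! 0 \<in> set xs" using cycle_set_edges[OF assms(1)] eq by blast
  then show ?thesis using cycle_rch[OF cyc_E0[OF assms(1)]] by blast
qed

lemma cyc_same':
  assumes "is_cycle E xs" "set xs \<subseteq> U'" "is_cycle E xs'" "set xs' \<subseteq> U'"
  shows "rch E0 (xs ! 0) (xs' ! 0)"
  using sw.cyc_same[OF sw_swap assms] unfolding E0_swap .

lemma cyc_exists': "\<exists>xs. is_cycle E xs \<and> set xs \<subseteq> U'"
  using sw.cyc_exists[OF sw_swap] .

lemma two_sw: "two_switch E a b c d = E1"
proof -
  have "interchangeable E a b c d"
    unfolding interchangeable_def using ab(1) cd(1) dist ac_notin bd_notin by blast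
  then show ?thesis unfolding two_switch_def by simp
qed

lemma main1: "p_switch V E a b c d \<longleftrightarrow> \<not> bad E U U' E1"
proof -
  have "E1 \<noteq> E" using ac_notin by blast
  then show ?thesis unfolding p_switch_def two_sw using PF by blast
qed

lemma E0_dc: "E - {{a, b}, {d, c}} = E0" unfolding eqba by (rule refl)

lemma CH2:
  assumes u: "u \<in> U" and w: "w \<in> U'"
  shows "rch (E0 \<union> {{a, d}, {b, c}}) u w \<longleftrightarrow> (rch E0 a u \<and> rch E0 d w) \<or> (rch E0 b u \<and> rch E0 c w)"
  using sw.CH[OF sw_dc u w] unfolding E0_dc .

lemma main2: "p_switch V E a b d c \<longleftrightarrow> \<not> bad E U U' (E0 \<union> {{a, d}, {b, c}})"
  using sw.main1[OF sw_dc] unfolding E0_dc .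

lemma flip: "bad E U U' E1 \<longleftrightarrow> \<not> bad E U U' (E0 \<union> {{a, d}, {b, c}})"
proof
  assume b1: "bad E U U' E1"
  show "\<not> bad E U U' (E0 \<union> {{a, d}, {b, c}})"
  proof
    assume "bad E U U' (E0 \<union> {{a, d}, {b, c}})"
    then obtain xs' ys' where h': "is_cycle E xs'" "is_cycle E ys'" "set xs' \<subseteq> U" "set ys' \<subseteq> U'"
      "rch (E0 \<union> {{a, d}, {b, c}}) (xs' ! 0) (ys' ! 0)" unfolding bad_def by blast
    obtain xs ys where h: "is_cycle E xs" "is_cycle E ys" "set xs \<subseteq> U" "set ys \<subseteq> U'"
      "rch E1 (xs ! 0) (ys ! 0)" using b1 unfolding bad_def by blast
    let ?p = "xs ! 0" let ?q = "ys ! 0" let ?p' = "xs' ! 0" let ?q' = "ys' ! 0"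
    have pU: "?p \<in> U" "?p' \<in> U" using h(1,3) h'(1,3) cyc_hd by blast+
    have qU: "?q \<in> U'" "?q' \<in> U'" using h(2,4) h'(2,4) cyc_hd by blast+
    have pp: "rch E0 ?p ?p'" using cyc_same[OF h(1,3) h'(1,3)] .
    have qq: "rch E0 ?q ?q'" using cyc_same'[OF h(2,4) h'(2,4)] .
    have pp': "rch E0 ?p' ?p" using rch_sym[OF pp] .
    have qq': "rch E0 ?q' ?q" using rch_sym[OF qq] .
    have H1: "(rch E0 a ?p \<and> rch E0 c ?q) \<or> (rch E0 b ?p \<and> rch E0 d ?q)"
      using CH[OF pU(1) qU(1)] h(5) by blast
    have H2: "(rch E0 a ?p' \<and> rch E0 d ?q') \<or> (rch E0 b ?p' \<and> rch E0 c ?q')"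
      using CH2[OF pU(2) qU(2)] h'(5) by blast
    show False using H1 H2
    proof (elim disjE conjE)
      assume "rch E0 c ?q" "rch E0 d ?q'"
      then show False using chain4[of E0 c ?q ?q' d] qq ncd0 by blast
    next
      assume "rch E0 a ?p" "rch E0 b ?p'"
      then show False using chain4[of E0 a ?p ?p' b] pp nab0 by blast
    next
      assume "rch E0 b ?p" "rch E0 a ?p'"
      then show False using chain4[of E0 a ?p' ?p b] pp' nab0 by blast
    next
      assume "rch E0 d ?q" "rch E0 c ?q'"
      then show False using chain4[of E0 c ?q' ?q d] qq' ncd0 by blast
    qed
  qed
next
  assume nb2: "\<not> bad E U U' (E0 \<union> {{a, d}, {b, c}})"
  obtain xs where xs: "is_cycle E xs" "set xs \<subseteq> U" using cyc_exists by blast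
  obtain ys where ys: "is_cycle E ys" "set ys \<subseteq> U'" using cyc_exists' by blast
  let ?p = "xs ! 0" let ?q = "ys ! 0"
  have pU: "?p \<in> U" using xs cyc_hd by blast
  have qU: "?q \<in> U'" using ys cyc_hd by blast
  have "\<not> rch (E0 \<union> {{a, d}, {b, c}}) ?p ?q"
    using nb2 xs ys unfolding bad_def by blast
  then have "\<not> ((rch E0 a ?p \<and> rch E0 d ?q) \<or> (rch E0 b ?p \<and> rch E0 c ?q))"
    using CH2[OF pU qU] by blast
  moreover have "rch E0 a ?p \<or> rch E0 b ?p" by (rule R1[OF pU])
  moreover have "rch E0 c ?q \<or> rch E0 d ?q" by (rule R1'[OF qU])
  ultimately have "(rch E0 a ?p \<and> rch E0 c ?q) \<or> (rch E0 b ?p \<and> rch E0 d ?q)" by blast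
  then have "rch E1 ?p ?q" using CH[OF pU qU] by blast
  then show "bad E U U' E1" unfolding bad_def using xs ys by blast
qed

end

theorem lemma4p6:
  fixes V :: "'a set" and E :: "'a set set" and U U' :: "'a set" and a b c d :: 'a
  assumes "pseudoforest V E"
    and "U \<in> components V E" and "U' \<in> components V E" and "U \<noteq> U'"
    and "unicyclic U (induced E U)" and "unicyclic U' (induced E U')"
    and "{a, b} \<in> forest_edges (induced E U)"
    and "{c, d} \<in> forest_edges (induced E U')"
  shows "p_switch V E a b c d \<longleftrightarrow> \<not> p_switch V E a b d c"
proof -
  interpret sw V E U U' a b c d
    by unfold_locales (use assms in auto)
  show ?thesis using main1 main2 flip by blast
qed

end
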